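(* Let $k\geq 3$ and let $G$ be a diregular $(2,k,+3)$-digraph. Let $u,v$ be distinct vertices of $G$ having exactly one common out-neighbour $u_2$, and write $N^+(u)=\{u_1,u_2\}$, $N^+(v)=\{v_1,u_2\}$. Then $v_1 \in O(u)$ and $u_1 \in O(v)$.
   Context: A digraph is $k$-geodetic if for every ordered pair of vertices $x,y$ there is at most one directed path from $x$ to $y$ of length at most $k$ (the trivial path of length $0$ counts, so there are no directed cycles of length at most $k$). $M(d,k)=1+d+\dots+d^k$. A diregular $(d,k,+\epsilon)$-digraph is a $k$-geodetic digraph of order $M(d,k)+\epsilon$ in which every vertex has in-degree and out-degree exactly $d$. $N^+(x)$ is the set of out-neighbours of $x$. The distance $d(x,y)$ is the length of a shortest directed path from $x$ to $y$ ($\infty$ if none). The outlier set of a vertex $x$ is $O(x)=\{y\in V(G): d(x,y)\geq k+1\}$; in a diregular $(2,k,+3)$-digraph, $|O(x)|=3$ for every $x$. *)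

theory Defs
  imports Main "HOL-Library.Extended_Nat"
begin

text \<open>A finite digraph is given by a finite vertex set V and an arc relation A
 (no multiple arcs). A walk is a nonempty vertex list with consecutive arcs;
 its length is the number of arcs.\<close>

definition is_walk :: "'a set \<Rightarrow> ('a \<Rightarrow> 'a \<Rightarrow> bool) \<Rightarrow> 'a list \<Rightarrow> bool" where
  "is_walk V A p \<longleftrightarrow> p \<noteq> [] \<and> set p \<subseteq> V \<and>
     (\<forall>i. Suc i < length p \<longrightarrow> A (p ! i) (p ! Suc i))"

definition walks_upto :: "'a set \<Rightarrow> ('a \<Rightarrow> 'a \<Rightarrow> bool) \<Rightarrow> nat \<Rightarrow> 'a \<Rightarrow> 'a \<Rightarrow> 'a list set" where
  "walks_upto V A k x y = {p. is_walk V A p \<and> hd p = x \<and> last p = y \<and> length p - 1 \<le> k}"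

definition k_geodetic :: "'a set \<Rightarrow> ('a \<Rightarrow> 'a \<Rightarrow> bool) \<Rightarrow> nat \<Rightarrow> bool" where
  "k_geodetic V A k \<longleftrightarrow> (\<forall>x\<in>V. \<forall>y\<in>V. card (walks_upto V A k x y) \<le> 1 \<and> finite (walks_upto V A k x y))"

definition out_nbrs :: "'a set \<Rightarrow> ('a \<Rightarrow> 'a \<Rightarrow> bool) \<Rightarrow> 'a \<Rightarrow> 'a set" where
  "out_nbrs V A x = {y\<in>V. A x y}"

definition in_nbrs :: "'a set \<Rightarrow> ('a \<Rightarrow> 'a \<Rightarrow> bool) \<Rightarrow> 'a \<Rightarrow> 'a set" where
  "in_nbrs V A x = {y\<in>V. A y x}"

definition moore_bound :: "nat \<Rightarrow> nat \<Rightarrow> nat" where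
  "moore_bound d k = (\<Sum>i\<le>k. d ^ i)"

definition diregular_digraph :: "'a set \<Rightarrow> ('a \<Rightarrow> 'a \<Rightarrow> bool) \<Rightarrow> nat \<Rightarrow> bool" where
  "diregular_digraph V A d \<longleftrightarrow> finite V \<and> (\<forall>x y. A x y \<longrightarrow> x \<in> V \<and> y \<in> V) \<and>
     (\<forall>x\<in>V. card (out_nbrs V A x) = d \<and> card (in_nbrs V A x) = d)"

definition dke_digraph :: "'a set \<Rightarrow> ('a \<Rightarrow> 'a \<Rightarrow> bool) \<Rightarrow> nat \<Rightarrow> nat \<Rightarrow> nat \<Rightarrow> bool" where
  "dke_digraph V A d k e \<longleftrightarrow> diregular_digraph V A d \<and> k_geodetic V A k \<and>
     card V = moore_bound d k + e"

text \<open>Distance: length of a shortest walk, infinity if none.\<close>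
definition dist :: "'a set \<Rightarrow> ('a \<Rightarrow> 'a \<Rightarrow> bool) \<Rightarrow> 'a \<Rightarrow> 'a \<Rightarrow> enat" where
  "dist V A x y = (INF p\<in>{p. is_walk V A p \<and> hd p = x \<and> last p = y}. enat (length p - 1))"

definition outliers :: "'a set \<Rightarrow> ('a \<Rightarrow> 'a \<Rightarrow> bool) \<Rightarrow> nat \<Rightarrow> 'a \<Rightarrow> 'a set" where
  "outliers V A k x = {y\<in>V. dist V A x y \<ge> enat (k + 1)}"

end

theory Submission
  imports Defs
begin

locale geo2 =
  fixes V :: "'a set" and A :: "'a \<Rightarrow> 'a \<Rightarrow> bool" and k :: nat
  assumes finV: "finite V"
    and arcV: "A x y \<Longrightarrow> x \<in> V \<and> y \<in> V"
    and outdeg: "x \<in> V \<Longrightarrow> card (out_nbrs V A x) = 2"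
    and geod: "k_geodetic V A k"
begin

definition rw :: "'a \<Rightarrow> 'a \<Rightarrow> nat \<Rightarrow> bool" where
  "rw x y n \<longleftrightarrow> (\<exists>p. is_walk V A p \<and> hd p = x \<and> last p = y \<and> length p = Suc n)"

lemma is_walk_Cons:
  assumes q: "q \<noteq> []"
  shows "is_walk V A (x # q) \<longleftrightarrow> x \<in> V \<and> A x (hd q) \<and> is_walk V A q"
proof
  assume H: "is_walk V A (x # q)"
  have "A ((x#q) ! 0) ((x#q) ! Suc 0)" using H q unfolding is_walk_def by auto
  then have "A x (hd q)" using q by (simp add: hd_conv_nth)
  moreover have "is_walk V A q" unfolding is_walk_def
  proof (intro conjI allI impI)
    show "q \<noteq> []" by (rule q)
    show "set q \<subseteq> V" using H unfolding is_walk_def by auto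
    fix i assume "Suc i < length q"
    then have "A ((x#q) ! Suc i) ((x#q) ! Suc (Suc i))" using H unfolding is_walk_def by auto
    then show "A (q ! i) (q ! Suc i)" by simp
  qed
  moreover have "x \<in> V" using H unfolding is_walk_def by auto
  ultimately show "x \<in> V \<and> A x (hd q) \<and> is_walk V A q" by blast
next
  assume H: "x \<in> V \<and> A x (hd q) \<and> is_walk V A q"
  show "is_walk V A (x # q)" unfolding is_walk_def
  proof (intro conjI allI impI)
    show "x # q \<noteq> []" by simp
    show "set (x # q) \<subseteq> V" using H unfolding is_walk_def by auto
    fix i assume i: "Suc i < length (x # q)"
    show "A ((x # q) ! i) ((x # q) ! Suc i)"
    proof (cases i)
      case 0
      then show ?thesis using H q by (simp add: hd_conv_nth)
    next
      case (Suc j)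
      then show ?thesis using H i unfolding is_walk_def by auto
    qed
  qed
qed

lemma rw_V: "rw x y n \<Longrightarrow> x \<in> V \<and> y \<in> V"
  unfolding rw_def is_walk_def by (metis hd_in_set last_in_set subsetD)

lemma rw_0: "rw x y 0 \<longleftrightarrow> x = y \<and> x \<in> V"
proof
  assume "rw x y 0"
  then obtain p where p: "is_walk V A p" "hd p = x" "last p = y" "length p = 1"
    unfolding rw_def by auto
  then obtain z where "p = [z]" by (metis One_nat_def length_0_conv length_Suc_conv)
  then show "x = y \<and> x \<in> V" using p unfolding is_walk_def by auto
next
  assume "x = y \<and> x \<in> V"
  then show "rw x y 0" unfolding rw_def is_walk_def by (intro exI[of _ "[x]"]) auto
qed

lemma rw_Suc: "rw x y (Suc n) \<longleftrightarrow> (\<exists>z. A x z \<and> rw z y n)"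
proof
  assume "rw x y (Suc n)"
  then obtain p where p: "is_walk V A p" "hd p = x" "last p = y" "length p = Suc (Suc n)"
    unfolding rw_def by auto
  then obtain q where pq: "p = x # q" and q: "q \<noteq> []"
    by (metis length_Suc_conv list.sel(1) list.size(3) nat.distinct(1))
  have "x \<in> V \<and> A x (hd q) \<and> is_walk V A q" using p(1) pq is_walk_Cons[OF q] by simp
  moreover have "last q = y" using p(3) pq q by simp
  moreover have "length q = Suc n" using p(4) pq by simp
  ultimately show "\<exists>z. A x z \<and> rw z y n" unfolding rw_def by blast
next
  assume "\<exists>z. A x z \<and> rw z y n"
  then obtain z q where z: "A x z" and q: "is_walk V A q" "hd q = z" "last q = y" "length q = Suc n"
    unfolding rw_def by auto
  have qn: "q \<noteq> []" using q(4) by auto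
  have "is_walk V A (x # q)" using is_walk_Cons[OF qn] z q arcV by auto
  then show "rw x y (Suc n)" unfolding rw_def using q qn by (intro exI[of _ "x # q"]) auto
qed

lemma rw_1: "rw x y 1 \<longleftrightarrow> A x y"
  using rw_Suc[of x y 0] rw_0 arcV by auto

lemma rw_add: "rw x y n \<Longrightarrow> rw y z m \<Longrightarrow> rw x z (n + m)"
proof (induction n arbitrary: x)
  case 0
  then show ?case using rw_0 by auto
next
  case (Suc n)
  then obtain x' where "A x x'" "rw x' y n" using rw_Suc by auto
  then show ?case using Suc rw_Suc by auto
qed

lemma rw_snoc: "rw x y (Suc n) \<longleftrightarrow> (\<exists>z. rw x z n \<and> A z y)"
proof
  show "rw x y (Suc n) \<Longrightarrow> \<exists>z. rw x z n \<and> A z y"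
  proof (induction n arbitrary: x)
    case 0
    then show ?case using rw_Suc[of x y 0] rw_0 arcV by auto
  next
    case (Suc n)
    then obtain x' where x': "A x x'" "rw x' y (Suc n)" using rw_Suc by blast
    then obtain z where "rw x' z n" "A z y" using Suc.IH by blast
    then show ?case using x' rw_Suc by blast
  qed
next
  assume "\<exists>z. rw x z n \<and> A z y"
  then show "rw x y (Suc n)" using rw_add[of x _ n y 1] rw_1 by auto
qed

lemma walk_unique:
  assumes "is_walk V A p" "is_walk V A q" "hd p = hd q" "last p = last q"
    "length p \<le> Suc k" "length q \<le> Suc k"
  shows "p = q"
proof -
  have xV: "hd p \<in> V" "last p \<in> V" using assms(1) unfolding is_walk_def
    by (auto intro: hd_in_set last_in_set)
  let ?S = "walks_upto V A k (hd p) (last p)"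
  have "p \<in> ?S" "q \<in> ?S" using assms unfolding walks_upto_def by auto
  moreover have "card ?S \<le> 1" "finite ?S" using geod xV unfolding k_geodetic_def by auto
  ultimately show ?thesis using card_le_Suc0_iff_eq by (metis One_nat_def)
qed

lemma geo_len: "rw x y n \<Longrightarrow> rw x y m \<Longrightarrow> n \<le> k \<Longrightarrow> m \<le> k \<Longrightarrow> n = m"
  unfolding rw_def using walk_unique by (metis Suc_le_mono Suc_inject)

lemma geo_two:
  assumes "A x z1" "A x z2" "rw z1 y n1" "rw z2 y n2" "n1 < k" "n2 < k"
  shows "z1 = z2"
proof -
  obtain p1 where p1: "is_walk V A p1" "hd p1 = z1" "last p1 = y" "length p1 = Suc n1"
    using assms(3) unfolding rw_def by auto
  obtain p2 where p2: "is_walk V A p2" "hd p2 = z2" "last p2 = y" "length p2 = Suc n2"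
    using assms(4) unfolding rw_def by auto
  have ne: "p1 \<noteq> []" "p2 \<noteq> []" using p1 p2 by auto
  have xV: "x \<in> V" using arcV assms(1) by auto
  have "is_walk V A (x # p1)" "is_walk V A (x # p2)"
    using is_walk_Cons[OF ne(1)] is_walk_Cons[OF ne(2)] p1 p2 assms xV by auto
  then have "x # p1 = x # p2"
    using walk_unique[of "x # p1" "x # p2"] p1 p2 ne assms by auto
  then show ?thesis using p1 p2 by auto
qed

lemma no_cycle: "rw x x n \<Longrightarrow> 0 < n \<Longrightarrow> n \<le> k \<Longrightarrow> False"
  using geo_len[of x x n 0] rw_0 rw_V by fastforce

lemma first_step: "rw x y n \<Longrightarrow> x \<noteq> y \<Longrightarrow> \<exists>n' z. n = Suc n' \<and> A x z \<and> rw z y n'"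
  by (cases n) (auto simp: rw_0 rw_Suc)

lemma fin_layer: "finite {y. rw x y n}"
  using finV rw_V by (metis (no_types, lifting) mem_Collect_eq rev_finite_subset subsetI)

lemma two_nbrs: "x \<in> V \<Longrightarrow> \<exists>z1 z2. z1 \<noteq> z2 \<and> (\<forall>z. A x z \<longleftrightarrow> z = z1 \<or> z = z2)"
proof -
  assume "x \<in> V"
  then have "card (out_nbrs V A x) = 2" by (rule outdeg)
  then obtain z1 z2 where z: "out_nbrs V A x = {z1, z2}" "z1 \<noteq> z2"
    unfolding card_2_iff by blast
  have "\<forall>z. A x z \<longleftrightarrow> z = z1 \<or> z = z2"
  proof (intro allI iffI)
    fix z assume "A x z"
    then have "z \<in> out_nbrs V A x" unfolding out_nbrs_def using arcV by blast
    then show "z = z1 \<or> z = z2" using z by blast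
  next
    fix z assume "z = z1 \<or> z = z2"
    then have "z \<in> out_nbrs V A x" using z by blast
    then show "A x z" unfolding out_nbrs_def by blast
  qed
  then show ?thesis using z by blast
qed

lemma other_child: "x \<in> V \<Longrightarrow> \<exists>y. A x y \<and> y \<noteq> z"
proof -
  assume "x \<in> V"
  then obtain z1 z2 where "z1 \<noteq> z2" "\<forall>y. A x y \<longleftrightarrow> y = z1 \<or> y = z2"
    using two_nbrs by blast
  then show ?thesis by (cases "z1 = z") auto
qed

lemma card_layer: "n \<le> k \<Longrightarrow> x \<in> V \<Longrightarrow> card {y. rw x y n} = 2 ^ n"
proof (induction n arbitrary: x)
  case 0
  then have "{y. rw x y 0} = {x}" using rw_0 by auto
  then show ?case by simp
next
  case (Suc n)
  obtain z1 z2 where z: "z1 \<noteq> z2" "\<And>z. A x z \<longleftrightarrow> z = z1 \<or> z = z2"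
    using two_nbrs[OF Suc.prems(2)] by blast
  have zV: "z1 \<in> V" "z2 \<in> V" using z arcV by blast+
  have eq: "{y. rw x y (Suc n)} = {y. rw z1 y n} \<union> {y. rw z2 y n}"
    using z rw_Suc by auto
  have disj: "{y. rw z1 y n} \<inter> {y. rw z2 y n} = {}"
  proof (rule ccontr)
    assume "{y. rw z1 y n} \<inter> {y. rw z2 y n} \<noteq> {}"
    then obtain y where "rw z1 y n" "rw z2 y n" by auto
    then have "z1 = z2" using geo_two[of x z1 z2 y n n] z Suc.prems by auto
    then show False using z by auto
  qed
  have "card {y. rw x y (Suc n)} = card {y. rw z1 y n} + card {y. rw z2 y n}"
    unfolding eq using disj fin_layer by (simp add: card_Un_disjoint)
  also have "\<dots> = 2 ^ Suc n" using Suc zV by simp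
  finally show ?case .
qed

lemma card_reach: "x \<in> V \<Longrightarrow> card {y. \<exists>n\<le>k. rw x y n} = moore_bound 2 k"
proof -
  assume xV: "x \<in> V"
  have eq: "{y. \<exists>n\<le>k. rw x y n} = (\<Union>n\<in>{..k}. {y. rw x y n})" by auto
  have "card (\<Union>n\<in>{..k}. {y. rw x y n}) = (\<Sum>n\<in>{..k}. card {y. rw x y n})"
  proof (rule card_UN_disjoint)
    show "finite {..k}" by simp
    show "\<forall>i\<in>{..k}. finite {y. rw x y i}" using fin_layer by blast
    show "\<forall>i\<in>{..k}. \<forall>j\<in>{..k}. i \<noteq> j \<longrightarrow> {y. rw x y i} \<inter> {y. rw x y j} = {}"
      using geo_len by fastforce
  qed
  also have "\<dots> = (\<Sum>n\<le>k. 2 ^ n)" using card_layer xV by simp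
  finally show ?thesis unfolding moore_bound_def eq by simp
qed

lemma outliers_iff: "y \<in> outliers V A k x \<longleftrightarrow> y \<in> V \<and> \<not> (\<exists>n\<le>k. rw x y n)"
proof -
  have "enat (k + 1) \<le> dist V A x y \<longleftrightarrow>
        (\<forall>p\<in>{p. is_walk V A p \<and> hd p = x \<and> last p = y}. enat (k + 1) \<le> enat (length p - 1))"
    unfolding dist_def by (rule le_INF_iff)
  also have "\<dots> \<longleftrightarrow> \<not> (\<exists>n\<le>k. rw x y n)"
  proof
    assume H: "\<forall>p\<in>{p. is_walk V A p \<and> hd p = x \<and> last p = y}. enat (k + 1) \<le> enat (length p - 1)"
    show "\<not> (\<exists>n\<le>k. rw x y n)"
    proof
      assume "\<exists>n\<le>k. rw x y n"
      then obtain n p where "n \<le> k" "is_walk V A p" "hd p = x" "last p = y" "length p = Suc n"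
        unfolding rw_def by auto
      then show False using H by auto
    qed
  next
    assume H: "\<not> (\<exists>n\<le>k. rw x y n)"
    show "\<forall>p\<in>{p. is_walk V A p \<and> hd p = x \<and> last p = y}. enat (k + 1) \<le> enat (length p - 1)"
    proof
      fix p assume p: "p \<in> {p. is_walk V A p \<and> hd p = x \<and> last p = y}"
      then have "p \<noteq> []" unfolding is_walk_def by auto
      then have "length p = Suc (length p - 1)" by simp
      then have "rw x y (length p - 1)" using p unfolding rw_def by blast
      then have "\<not> length p - 1 \<le> k" using H by blast
      then show "enat (k + 1) \<le> enat (length p - 1)" by simp
    qed
  qed
  finally show ?thesis unfolding outliers_def by auto
qed

lemma card_outliers:
  assumes "x \<in> V" "card V = moore_bound 2 k + 3"
  shows "card (outliers V A k x) = 3"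
proof -
  have eq: "outliers V A k x = V - {y. \<exists>n\<le>k. rw x y n}" using outliers_iff by auto
  have sub: "{y. \<exists>n\<le>k. rw x y n} \<subseteq> V" using rw_V by auto
  show ?thesis unfolding eq using card_Diff_subset[OF rev_finite_subset[OF finV sub] sub]
      card_reach[OF assms(1)] assms(2) by simp
qed


lemma main:
  assumes k3: "3 \<le> k" and cardV: "card V = moore_bound 2 k + 3"
    and uV: "u \<in> V" and vV: "v \<in> V" and uv: "u \<noteq> v"
    and int: "out_nbrs V A u \<inter> out_nbrs V A v = {u2}"
    and Nu: "out_nbrs V A u = {u1, u2}"
    and Nv: "out_nbrs V A v = {v1, u2}"
  shows "v1 \<in> outliers V A k u"
proof -
  obtain K where kK: "k = K + 3" using k3 by (metis add.commute le_iff_add)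
  have Au1: "A u u1" and Au2: "A u u2"
    using Nu unfolding out_nbrs_def by (metis (no_types, lifting) insertCI mem_Collect_eq)+
  have Av1: "A v v1" and Av2: "A v u2"
    using Nv unfolding out_nbrs_def by (metis (no_types, lifting) insertCI mem_Collect_eq)+
  have Au: "z = u1 \<or> z = u2" if "A u z" for z
  proof -
    have "z \<in> out_nbrs V A u" using that arcV unfolding out_nbrs_def by blast
    then show ?thesis using Nu by blast
  qed
  have Av: "z = v1 \<or> z = u2" if "A v z" for z
  proof -
    have "z \<in> out_nbrs V A v" using that arcV unfolding out_nbrs_def by blast
    then show ?thesis using Nv by blast
  qed
  have u12: "u1 \<noteq> u2"
  proof
    assume "u1 = u2"
    then have "card (out_nbrs V A u) = 1" using Nu by simp
    then show False using outdeg[OF uV] by simp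
  qed
  have v12: "v1 \<noteq> u2"
  proof
    assume "v1 = u2"
    then have "card (out_nbrs V A v) = 1" using Nv by simp
    then show False using outdeg[OF vV] by simp
  qed
  have uv1: "u1 \<noteq> v1"
  proof
    assume "u1 = v1"
    then have "u1 \<in> out_nbrs V A u \<inter> out_nbrs V A v" using Nu Nv by simp
    then show False using int u12 by simp
  qed
  have v1V: "v1 \<in> V" and u1V: "u1 \<in> V" and u2V: "u2 \<in> V" using arcV Av1 Au1 Au2 by blast+
  have r1: "rw x y 1" if "A x y" for x y using that rw_1 by simp
  have r0: "rw x x 0" if "x \<in> V" for x using that rw_0 by simp
  have OU: "card (outliers V A k u) = 3" using card_outliers[OF uV cardV] .
  have OV: "card (outliers V A k v) = 3" using card_outliers[OF vV cardV] .
  have finO: "finite (outliers V A k x)" for x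
    using finV unfolding outliers_def by simp
  have "\<not> (\<exists>n\<le>k. rw u v1 n)"
  proof
    assume "\<exists>n\<le>k. rw u v1 n"
    then obtain n where n: "n \<le> k" "rw u v1 n" by blast
    have uv1': "u \<noteq> v1"
    proof
      assume "u = v1"
      then have "rw v u 1" using r1[OF Av1] by simp
      then have "rw v u2 (1 + 1)" by (rule rw_add[OF _ r1[OF Au2]])
      then have "rw v u2 2" by (simp add: numeral_2_eq_2)
      then show False using geo_len[OF _ r1[OF Av2]] k3 by fastforce
    qed
    obtain n' z where nz: "n = Suc n'" "A u z" "rw z v1 n'" using first_step[OF n(2) uv1'] by blast
    have zu1: "z = u1"
    proof (rule ccontr)
      assume "z \<noteq> u1"
      then have "z = u2" using Au nz by blast
      then have "rw v v1 (Suc n')" using rw_Suc Av2 nz by blast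
      then have "Suc n' = 1" using geo_len[OF _ r1[OF Av1]] n nz by simp
      then show False using nz \<open>z = u2\<close> v12 rw_0 by auto
    qed
    have P: "rw u1 v1 n'" using nz zu1 by simp
    have n'k: "n' < k" using n nz by simp
    have stepB: "\<not> rw u v m" if m: "m \<le> k" for m
    proof
      assume H: "rw u v m"
      obtain m' z where mz: "m = Suc m'" "A u z" "rw z v m'" using first_step[OF H uv] by blast
      have H2: "rw u u2 (m + 1)" using rw_add[OF H r1[OF Av2]] .
      have mk: "m = k"
      proof (rule ccontr)
        assume "m \<noteq> k"
        then have "m + 1 \<le> k" using m by simp
        then have "m + 1 = 1" using geo_len[OF H2 r1[OF Au2]] by simp
        then show False using mz by simp
      qed
      show False
      proof (cases "z = u2")
        case True
        then have "rw u2 u2 (m' + 1)" using rw_add[OF _ r1[OF Av2]] mz by simp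
        then show False using no_cycle[of u2 "m' + 1"] mz mk by simp
      next
        case False
        then have "z = u1" using Au mz by blast
        then have "rw u1 v1 (m' + 1)" using rw_add[OF _ r1[OF Av1]] mz by simp
        moreover have "m' + 1 = k" using mz mk by simp
        ultimately show False using geo_len[OF _ P] n'k by fastforce
      qed
    qed
    have vO: "v \<in> outliers V A k u" using outliers_iff stepB vV by blast
    have n'1: "n' \<noteq> 0" using P uv1 rw_0 by (metis)
    have n'k1: "n' = K + 2"
    proof (rule ccontr)
      assume "n' \<noteq> K + 2"
      then have n'le: "n' \<le> K + 1" using n'k kK by simp
      define j where "j = k - n'"
      have j2: "2 \<le> j" and jk: "j < k" and nj: "n' + j = k" using n'le n'1 kK unfolding j_def by simp_all
      let ?E = "{y. rw v1 y j}"
      have cE: "card ?E = 2 ^ j" using card_layer[of j v1] jk v1V by simp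
      have "(2::nat) ^ 2 \<le> 2 ^ j" using j2 by (rule power_increasing) simp
      then have c4: "4 \<le> card ?E" using cE by simp
      have sub: "?E \<subseteq> insert u (outliers V A k u - {v})"
      proof
        fix y assume "y \<in> ?E"
        then have Y: "rw v1 y j" by simp
        have yV: "y \<in> V" using rw_V[OF Y] by simp
        have yv: "y \<noteq> v"
        proof
          assume "y = v"
          then have "rw v1 v j" using Y by simp
          then have "rw v1 v1 (j + 1)" by (rule rw_add[OF _ r1[OF Av1]])
          then show False using no_cycle[of v1 "j + 1"] jk by simp
        qed
        have R: "rw u1 y k" using rw_add[OF P Y] nj by simp
        have "y \<in> outliers V A k u \<or> y = u"
        proof (rule disjCI)
          assume yu: "\<not> y = u"
          show "y \<in> outliers V A k u"
            unfolding outliers_iff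
          proof (intro conjI yV notI)
            assume "\<exists>m\<le>k. rw u y m"
            then obtain m where m: "m \<le> k" "rw u y m" by blast
            obtain m' z where mz: "m = Suc m'" "A u z" "rw z y m'"
              using first_step[OF m(2) yu[symmetric]] by blast
            show False
            proof (cases "z = u1")
              case True
              then show False using geo_len[OF R] mz m by fastforce
            next
              case False
              then have "z = u2" using Au mz by blast
              then have "u2 = v1" using geo_two[OF Av2 Av1 _ Y] mz m jk by simp
              then show False using v12 by simp
            qed
          qed
        qed
        then show "y \<in> insert u (outliers V A k u - {v})" using yv by blast
      qed
      have "card (insert u (outliers V A k u - {v})) \<le> Suc (card (outliers V A k u - {v}))"
        by (rule card_insert_le_m1) simp_all
      also have "card (outliers V A k u - {v}) = 2" using OU vO finO by simp
      finally have c3: "card (insert u (outliers V A k u - {v})) \<le> 3" by simp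
      have "finite (insert u (outliers V A k u - {v}))" using finO by simp
      then have "card ?E \<le> card (insert u (outliers V A k u - {v}))" using card_mono sub by blast
      then have "card ?E \<le> 3" using c3 by linarith
      then show False using c4 by simp
    qed
    have "rw u1 v1 (Suc (K + 1))" using P n'k1 by simp
    then obtain w where Pw: "rw u1 w (K + 1)" and wv1: "A w v1"
      using rw_snoc by blast
    have "rw u1 w (Suc K)" using Pw by simp
    then obtain g where Pg: "rw u1 g K" and gw: "A g w"
      using rw_snoc by blast
    have wV: "w \<in> V" and gV: "g \<in> V" using arcV wv1 gw by blast+
    obtain w' where ww': "A w w'" "w' \<noteq> v1" using other_child[OF wV] by blast
    obtain x where gx: "A g x" "x \<noteq> w" using other_child[OF gV] by blast
    have w'V: "w' \<in> V" and xV: "x \<in> V" using arcV ww' gx by blast+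
    have Pw': "rw u1 w' (K + 2)" using rw_add[OF Pw r1[OF ww'(1)]] by simp
    have Px: "rw u1 x (K + 1)" using rw_add[OF Pg r1[OF gx(1)]] by simp
    have KEY: "\<exists>t<k. rw v1 y t" if Y: "rw u1 y m" "m < k" "y \<notin> outliers V A k v" for y m
    proof -
      have yV: "y \<in> V" using rw_V Y by blast
      have yv: "v \<noteq> y"
      proof
        assume "v = y"
        then have "rw u v (Suc m)" using rw_Suc Au1 Y by blast
        then show False using stepB Y by simp
      qed
      obtain s where s: "s \<le> k" "rw v y s" using Y(3) yV outliers_iff by blast
      obtain s' z where sz: "s = Suc s'" "A v z" "rw z y s'" using first_step[OF s(2) yv] by blast
      show ?thesis
      proof (cases "z = v1")
        case True
        then show ?thesis using sz s by (intro exI[of _ "s'"]) auto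
      next
        case False
        then have "z = u2" using Av sz by blast
        then have "u1 = u2" using geo_two[OF Au1 Au2 Y(1)] sz s Y by simp
        then show ?thesis using u12 by simp
      qed
    qed
    have wO: "w \<in> outliers V A k v"
    proof (rule ccontr)
      assume "w \<notin> outliers V A k v"
      then obtain t where t: "t < k" "rw v1 w t" using KEY[OF Pw] kK by auto
      then have "rw w w (Suc t)" using rw_Suc wv1 by blast
      then show False using no_cycle[of w "Suc t"] t by simp
    qed
    have w'O: "w' \<in> outliers V A k v"
    proof (rule ccontr)
      assume "w' \<notin> outliers V A k v"
      then obtain t where t: "t < k" "rw v1 w' t" using KEY[OF Pw'] kK by auto
      then have "v1 = w'" using geo_two[OF wv1 ww'(1) t(2) r0[OF w'V]] kK by simp
      then show False using ww' by simp
    qed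
    have Z: "u \<in> outliers V A k v \<or> u1 \<in> outliers V A k v"
    proof (rule ccontr)
      assume "\<not> ?thesis"
      then have nu: "u \<notin> outliers V A k v" and nu1: "u1 \<notin> outliers V A k v" by auto
      obtain s where s: "s \<le> k" "rw v u s" using nu uV outliers_iff by blast
      obtain s' z where sz: "s = Suc s'" "A v z" "rw z u s'" using first_step[OF s(2) uv[symmetric]] by blast
      have zv1: "z = v1"
      proof (rule ccontr)
        assume "z \<noteq> v1"
        then have "z = u2" using Av sz by blast
        then have "rw u u (Suc s')" using rw_Suc Au2 sz by blast
        then show False using no_cycle[of u "Suc s'"] sz s by simp
      qed
      have H1: "rw v u2 (Suc (s' + 1))" using rw_Suc Av1 rw_add[of v1 u s' u2 1] sz zv1 r1[OF Au2] by blast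
      have s'k: "s' = k - 1"
      proof (rule ccontr)
        assume "s' \<noteq> k - 1"
        then have "Suc (s' + 1) \<le> k" using sz s by simp
        then show False using geo_len[OF H1 r1[OF Av2]] by simp
      qed
      have H2: "rw v1 u1 k" using rw_add[of v1 u s' u1 1] sz zv1 r1[OF Au1] s'k k3 by simp
      obtain r where r: "r \<le> k" "rw v u1 r" using nu1 u1V outliers_iff by blast
      have vu1: "v \<noteq> u1"
      proof
        assume "v = u1"
        then show False using stepB[of 1] r1[OF Au1] k3 by simp
      qed
      obtain r' z' where rz: "r = Suc r'" "A v z'" "rw z' u1 r'" using first_step[OF r(2) vu1] by blast
      show False
      proof (cases "z' = v1")
        case True
        then show False using geo_len[OF H2] rz r by fastforce
      next
        case False
        then have "z' = u2" using Av rz by blast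
        then have "u1 = u2" using geo_two[OF Au1 Au2 r0[OF u1V]] rz r k3 by simp
        then show False using u12 by simp
      qed
    qed
    have ww'ne: "w \<noteq> w'" using no_cycle[of w 1] r1[OF ww'(1)] k3 by auto
    have "rw u w (Suc (K + 1))" using rw_Suc Au1 Pw by blast
    then have Pwu: "rw u w (K + 2)" by simp
    have wu: "w \<noteq> u" using no_cycle[of u "K + 2"] Pwu kK by auto
    have wu1: "w \<noteq> u1" using no_cycle[of u1 "K + 1"] Pw kK by auto
    have "rw u w' (Suc (K + 2))" using rw_Suc Au1 Pw' by blast
    then have Pw'u: "rw u w' (K + 3)" by (simp add: eval_nat_numeral)
    have w'u: "w' \<noteq> u" using no_cycle[of u "K + 3"] Pw'u kK by auto
    have w'u1: "w' \<noteq> u1" using no_cycle[of u1 "K + 2"] Pw' kK by auto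
    have ONLY: "y \<in> {w, w', u, u1}" if yO: "y \<in> outliers V A k v" for y
    proof (rule ccontr)
      assume yn: "y \<notin> {w, w', u, u1}"
      obtain zz where zz: "zz \<in> {u, u1}" "zz \<in> outliers V A k v" using Z by blast
      have "{w, w', zz, y} \<subseteq> outliers V A k v" using wO w'O zz yO by blast
      moreover have "card {w, w', zz, y} = 4"
        using zz(1) yn ww'ne wu wu1 w'u w'u1 by auto
      ultimately have "4 \<le> card (outliers V A k v)" using card_mono[OF finO] by metis
      then show False using OV by simp
    qed
    have xw': "x \<noteq> w'" using geo_len[OF Pw' ] Px kK by fastforce
    have "rw u x (Suc (K + 1))" using rw_Suc Au1 Px by blast
    then have Pxu: "rw u x (K + 2)" by simp
    have xu: "x \<noteq> u" using no_cycle[of u "K + 2"] Pxu kK by auto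
    have xu1: "x \<noteq> u1" using no_cycle[of u1 "K + 1"] Px kK by auto
    have xnO: "x \<notin> outliers V A k v" using ONLY gx(2) xw' xu xu1 by blast
    obtain tx where tx: "tx < k" "rw v1 x tx" using KEY[OF Px] xnO kK by auto
    have tx2: "tx \<ge> 2"
    proof (rule ccontr)
      assume "\<not> tx \<ge> 2"
      then have "rw u1 x (K + 2 + tx)" "K + 2 + tx \<le> k" using rw_add[OF P tx(2)] n'k1 kK by auto
      then show False using geo_len[OF _ Px] kK by fastforce
    qed
    show False
    proof (cases "K = 0")
      case False
      have gw': "g \<noteq> w'" using geo_len[OF Pw'] Pg kK by fastforce
      have "rw u g (Suc (K))" using rw_Suc Au1 Pg by blast
    then have Pgu: "rw u g (K + 1)" by simp
      have gu: "g \<noteq> u" using no_cycle[of u "K + 1"] Pgu kK by auto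
      have gu1: "g \<noteq> u1" using no_cycle[of u1 K] Pg kK False by auto
      have gwne: "g \<noteq> w" using no_cycle[of g 1] r1[OF gw] k3 by auto
      have gnO: "g \<notin> outliers V A k v" using ONLY gwne gw' gu gu1 by blast
      obtain tg where tg: "tg < k" "rw v1 g tg" using KEY[OF Pg] gnO kK by auto
      have "rw g g (Suc (Suc tg))" using rw_Suc gw wv1 tg by blast
      then have "\<not> Suc (Suc tg) \<le> k" using no_cycle[of g "Suc (Suc tg)"] by auto
      then have "tg = k - 1" using tg by simp
      then have "rw v1 x k" using rw_add[OF tg(2) r1[OF gx(1)]] k3 by simp
      then show False using geo_len[OF _ tx(2)] tx by fastforce
    next
      case True
      then have k3': "k = 3" using kK by simp
      have gu1: "g = u1" using Pg True rw_0 by simp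
      have tx2': "tx = 2" using tx tx2 k3' by simp
      have Au1w: "A u1 w" using Pw True rw_1 by simp
      have Au1x: "A u1 x" using gx gu1 by simp
      obtain x1 where xx1: "A x x1" using other_child[OF xV] by blast
      have Px1: "rw u1 x1 2" using rw_add[OF r1[OF Au1x] r1[OF xx1]] by (simp add: eval_nat_numeral)
      have x1w: "x1 \<noteq> w" using geo_len[OF Px1] Pw True k3' by fastforce
      have x1w': "x1 \<noteq> w'"
      proof
        assume "x1 = w'"
        then have "rw x w' 1" using r1 xx1 by simp
        moreover have "rw w w' 1" using r1 ww'(1) by simp
        ultimately have "w = x" using geo_two[OF Au1w Au1x, of w' 1 1] k3' by simp
        then show False using gx by simp
      qed
      have x1u: "x1 \<noteq> u"
      proof
        assume "x1 = u"
        have "rw u x1 (Suc 2)" using rw_Suc Au1 Px1 by blast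
        then have "rw u u 3" using \<open>x1 = u\<close> by simp
        then show False using no_cycle[of u 3] k3' by simp
      qed
      have x1u1: "x1 \<noteq> u1" using no_cycle[of u1 2] Px1 k3' by auto
      have x1nO: "x1 \<notin> outliers V A k v" using ONLY x1w x1w' x1u x1u1 by blast
      obtain t1 where t1: "t1 < k" "rw v1 x1 t1" using KEY[OF Px1] x1nO k3' by auto
      have "rw v1 x1 3" using rw_add[OF tx(2) r1[OF xx1]] tx2' by simp
      then show False using geo_len[OF _ t1(2)] t1 k3' by fastforce
    qed
  qed
  then show ?thesis using outliers_iff v1V by blast
qed

end

theorem theorem3:
  fixes V :: "'a set" and A :: "'a \<Rightarrow> 'a \<Rightarrow> bool" and k :: nat and u v u1 u2 v1 :: 'a
  assumes "k \<ge> 3"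
    and "dke_digraph V A 2 k 3"
    and "u \<in> V" and "v \<in> V" and "u \<noteq> v"
    and "out_nbrs V A u \<inter> out_nbrs V A v = {u2}"
    and "out_nbrs V A u = {u1, u2}"
    and "out_nbrs V A v = {v1, u2}"
  shows "v1 \<in> outliers V A k u \<and> u1 \<in> outliers V A k v"
proof -
  have D: "diregular_digraph V A 2" "k_geodetic V A k" "card V = moore_bound 2 k + 3"
    using assms(2) unfolding dke_digraph_def by auto
  interpret geo2 V A k
    using D(1,2) unfolding diregular_digraph_def by unfold_locales auto
  have 1: "v1 \<in> outliers V A k u"
    by (rule main[OF assms(1) D(3) assms(3-8)])
  have int2: "out_nbrs V A v \<inter> out_nbrs V A u = {u2}" using assms(6) by (simp add: Int_commute)
  have 2: "u1 \<in> outliers V A k v"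
    by (rule main[OF assms(1) D(3) assms(4) assms(3) assms(5)[symmetric] int2 assms(8) assms(7)])
  show ?thesis using 1 2 by simp
qed

end
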